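(* Let $f$ be a real-valued symmetric ternary tensor in $(\mathbb{C}^3)^{\otimes 3}$, and suppose there exist $\alpha,\beta_1,\beta_2\in\mathbb{C}^3$ with $f=\alpha^{\otimes 3}+\beta_1^{\otimes 3}+\beta_2^{\otimes 3}$ and $\langle\alpha,\beta_i\rangle=\langle\beta_i,\beta_i\rangle=0$ for $i=1,2$. Then there is a $3\times 3$ real orthogonal matrix $T$, $\epsilon\in\{0,1\}$, and $c,\lambda\in\mathbb{R}$ with $c\neq 0$, such that $$c\,T^{\otimes 3}f=\epsilon\big(\beta_0^{\otimes 3}+\overline{\beta_0}^{\otimes 3}\big)+\lambda\, e_3^{\otimes 3},\qquad \beta_0=(1,i,0)^T.$$ Consequently there exist $\alpha\in\mathbb{R}^3$ and $\beta\in\mathbb{C}^3$ such that $f=\alpha^{\otimes 3}+\beta^{\otimes 3}+\overline{\beta}^{\otimes 3}$ with $\langle\alpha,\beta\rangle=\langle\beta,\beta\rangle=0$.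
   Context: Ternary signatures on a 3-element domain are identified with tensors in $(\mathbb{C}^3)^{\otimes 3}$; symmetric means invariant under permutation of the three arguments. For $u,v\in\mathbb{C}^n$, $\langle u,v\rangle=\sum_j u_jv_j$ (bilinear, no conjugation). $\overline{\beta}$ is the entrywise complex conjugate. $e_3=(0,0,1)^T$. For a matrix $T$, $Tf$ denotes $T^{\otimes 3}f$. *)

theory Defs
  imports "HOL-Analysis.Analysis"
begin

type_synonym tensor3 = "3 \<Rightarrow> 3 \<Rightarrow> 3 \<Rightarrow> complex"

definition cube :: "complex^3 \<Rightarrow> tensor3" where
  "cube a = (\<lambda>i j k. a$i * a$j * a$k)"

definition symmetric_tensor :: "tensor3 \<Rightarrow> bool" where
  "symmetric_tensor f \<longleftrightarrow>
     (\<forall>i j k. f i j k = f j i k \<and> f i j k = f i k j \<and> f i j k = f k j i)"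

definition real_valued :: "tensor3 \<Rightarrow> bool" where
  "real_valued f \<longleftrightarrow> (\<forall>i j k. f i j k \<in> \<real>)"

definition bil :: "complex^3 \<Rightarrow> complex^3 \<Rightarrow> complex" where
  "bil u v = (\<Sum>j\<in>UNIV. u$j * v$j)"

definition conjv :: "complex^3 \<Rightarrow> complex^3" where
  "conjv b = (\<chi> j. cnj (b$j))"

definition tmat :: "real^3^3 \<Rightarrow> tensor3 \<Rightarrow> tensor3" where
  "tmat T f = (\<lambda>i j k. \<Sum>p\<in>UNIV. \<Sum>q\<in>UNIV. \<Sum>r\<in>UNIV.
      complex_of_real (T$i$p * T$j$q * T$k$r) * f p q r)"

definition e3 :: "complex^3" where "e3 = vector [0, 0, 1]"
definition beta0 :: "complex^3" where "beta0 = vector [1, \<i>, 0]"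

end

theory Submission
  imports Defs
begin


definition ev :: "tensor3 \<Rightarrow> complex^3 \<Rightarrow> complex^3 \<Rightarrow> complex^3 \<Rightarrow> complex" where
  "ev g u v w = (\<Sum>i\<in>UNIV. \<Sum>j\<in>UNIV. \<Sum>k\<in>UNIV. g i j k * u$i * v$j * w$k)"
definition contr :: "tensor3 \<Rightarrow> complex^3 \<Rightarrow> complex^3 \<Rightarrow> complex^3" where
  "contr g u v = (\<chi> k. \<Sum>i\<in>UNIV. \<Sum>j\<in>UNIV. g i j k * u$i * v$j)"
definition tr :: "tensor3 \<Rightarrow> complex^3" where
  "tr g = (\<chi> i. \<Sum>j\<in>UNIV. g i j j)"

lemma ev_cube: "ev (cube a) u v w = bil a u * bil a v * bil a w"
  unfolding ev_def cube_def bil_def by (simp add: sum_3 algebra_simps)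

lemma contr_cube: "contr (cube a) u v = (bil a u * bil a v) *s a"
  unfolding contr_def cube_def bil_def by (simp add: sum_3 algebra_simps vec_eq_iff)

lemma tr_cube: "tr (cube a) = bil a a *s a"
  unfolding tr_def cube_def bil_def by (simp add: sum_3 algebra_simps vec_eq_iff)

lemma ev_add: "ev (\<lambda>i j k. g i j k + h i j k) u v w = ev g u v w + ev h u v w"
  unfolding ev_def by (simp add: sum_3 algebra_simps)
lemma contr_add: "contr (\<lambda>i j k. g i j k + h i j k) u v = contr g u v + contr h u v"
  unfolding contr_def by (simp add: sum_3 algebra_simps vec_eq_iff)
lemma tr_add: "tr (\<lambda>i j k. g i j k + h i j k) = tr g + tr h"
  unfolding tr_def by (simp add: sum_3 algebra_simps vec_eq_iff)
lemma ev_scale: "ev (\<lambda>i j k. c * g i j k) u v w = c * ev g u v w"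
  unfolding ev_def by (simp add: sum_3 algebra_simps)

lemma cnj_real: "z \<in> \<real> \<Longrightarrow> cnj z = z"
  by (metis Reals_cases complex_cnj_complex_of_real)

lemma ev_real: "real_valued g \<Longrightarrow> cnj (ev g u v w) = ev g (conjv u) (conjv v) (conjv w)"
  unfolding ev_def conjv_def real_valued_def by (simp add: sum_3 cnj_real)
lemma contr_real: "real_valued g \<Longrightarrow> conjv (contr g u v) = contr g (conjv u) (conjv v)"
  unfolding contr_def conjv_def real_valued_def by (simp add: sum_3 cnj_real vec_eq_iff)
lemma tr_real: "real_valued g \<Longrightarrow> conjv (tr g) = tr g"
  unfolding tr_def conjv_def real_valued_def by (simp add: sum_3 cnj_real vec_eq_iff)

lemma bil_conj: "cnj (bil u v) = bil (conjv u) (conjv v)"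
  unfolding bil_def conjv_def by (simp add: sum_3)
lemma bil_sym: "bil u v = bil v u"
  unfolding bil_def by (simp add: sum_3 algebra_simps)
lemma bil_scale: "bil (c *s u) v = c * bil u v" "bil u (c *s v) = c * bil u v"
  unfolding bil_def by (simp_all add: sum_3 algebra_simps)
lemma bil_add: "bil (u + w) v = bil u v + bil w v" "bil u (v + w) = bil u v + bil u w"
  unfolding bil_def by (simp_all add: sum_3 algebra_simps)
lemma conjv_conjv[simp]: "conjv (conjv u) = u"
  unfolding conjv_def by (simp add: vec_eq_iff)
lemma conjv_scale: "conjv (c *s u) = cnj c *s conjv u"
  unfolding conjv_def by (simp add: vec_eq_iff)

lemma bil_self_conj: "bil v (conjv v) = of_real ((cmod (v$1))^2 + (cmod (v$2))^2 + (cmod (v$3))^2)"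
  unfolding bil_def conjv_def of_real_add complex_norm_square by (simp add: sum_3)

lemma bil_self_conj_zero: "bil v (conjv v) = 0 \<Longrightarrow> v = 0"
proof -
  assume "bil v (conjv v) = 0"
  hence h: "(cmod (v$1))^2 + (cmod (v$2))^2 + (cmod (v$3))^2 = 0"
    by (simp add: bil_self_conj del: of_real_add)
  hence "v$1 = 0" "v$2 = 0" "v$3 = 0"
    by (smt (verit) norm_eq_zero power2_less_eq_zero_iff zero_le_power2)+
  thus "v = 0" by (simp add: vec_eq_iff forall_3)
qed

lemma iso_key:
  fixes a b c x y z :: complex
  assumes "a^2+b^2+c^2=0" "x^2+y^2+z^2=0" "a*x+b*y+c*z=0"
  shows "a*y = b*x"
proof -
  have "(a*y-b*x)^2 = (a^2+b^2)*(x^2+y^2) - (a*x+b*y)^2" by algebra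
  also have "\<dots> = 0"
  proof -
    have "a^2+b^2 = -(c^2)" "x^2+y^2 = -(z^2)" "a*x+b*y = -(c*z)" using assms by algebra+
    thus ?thesis by (simp add: power2_eq_square)
  qed
  finally show ?thesis by simp
qed

lemma iso_cross:
  assumes "bil u u = 0" "bil v v = 0" "bil u v = 0"
  shows "u$i * v$j = u$j * v$i"
proof -
  have h: "(u$1)^2+(u$2)^2+(u$3)^2=0" "(v$1)^2+(v$2)^2+(v$3)^2=0" "u$1 * v$1+u$2 * v$2+u$3 * v$3=0"
    using assms unfolding bil_def by (simp_all add: sum_3 power2_eq_square)
  have "u$1 * v$2 = u$2 * v$1" by (rule iso_key[OF h])
  moreover have "u$1 * v$3 = u$3 * v$1" by (rule iso_key[where b="u$3" and c="u$2" and y="v$3" and z="v$2"]) (use h in \<open>simp_all add: algebra_simps\<close>)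
  moreover have "u$2 * v$3 = u$3 * v$2" by (rule iso_key[where b="u$3" and c="u$1" and y="v$3" and z="v$1"]) (use h in \<open>simp_all add: algebra_simps\<close>)
  ultimately show ?thesis using exhaust_3[of i] exhaust_3[of j] by auto
qed

lemma iso_par:
  assumes "bil u u = 0" "bil v v = 0" "bil u v = 0" "u \<noteq> 0"
  shows "\<exists>t. v = t *s u"
proof -
  obtain k where k: "u$k \<noteq> 0" using assms(4) by (metis vec_eq_iff zero_index)
  have "v = (v$k / u$k) *s u"
  proof (subst vec_eq_iff, intro allI)
    fix j
    have "u$k * v$j = u$j * v$k" by (rule iso_cross[OF assms(1-3)])
    thus "v$j = ((v$k / u$k) *s u)$j" using k by (simp add: field_simps)
  qed
  thus ?thesis by blast
qed

lemma cube_zero[simp]: "cube 0 = (\<lambda>i j k. 0)"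
  unfolding cube_def by simp

lemma iso_real_zero:
  assumes "real_valued g" "g = (\<lambda>i j k. K * cube u i j k)" "bil u u = 0"
  shows "g = (\<lambda>i j k. 0)"
proof -
  have "ev g (conjv u) (conjv u) (conjv u) = cnj (ev g u u u)" using ev_real[OF assms(1)] by simp
  also have "\<dots> = 0" using assms(2,3) by (simp add: ev_scale ev_cube)
  finally have "K * (bil u (conjv u))^3 = 0" using assms(2) by (simp add: ev_scale ev_cube power3_eq_cube)
  hence "K = 0 \<or> u = 0" using bil_self_conj_zero by auto
  thus ?thesis using assms(2) by auto
qed


lemma cube_scale: "cube (t *s u) = (\<lambda>i j k. t^3 * cube u i j k)"
  unfolding cube_def by (simp add: power3_eq_cube algebra_simps)
lemma conjv_zero[simp]: "conjv 0 = 0"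
  unfolding conjv_def by (simp add: vec_eq_iff)

lemma lemmaG:
  assumes "real_valued g" "g = (\<lambda>i j k. cube u i j k + cube v i j k)"
    and "bil u u = 0" "bil v v = 0"
  shows "\<exists>b. (b = 0 \<or> b = u) \<and> g = (\<lambda>i j k. cube b i j k + cube (conjv b) i j k)"
proof (cases "bil u v = 0")
  case True
  have "g = (\<lambda>i j k. 0)"
  proof (cases "u = 0")
    case True
    then show ?thesis using assms iso_real_zero[of g 1 v] by simp
  next
    case False
    then obtain t where t: "v = t *s u" using iso_par[OF assms(3,4) \<open>bil u v = 0\<close>] by blast
    have "g = (\<lambda>i j k. (1 + t^3) * cube u i j k)" using assms(2) t
      by (simp add: cube_scale algebra_simps)
    then show ?thesis using iso_real_zero assms by blast
  qed
  then show ?thesis by (intro exI[of _ 0]) simp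
next
  case False
  define s where "s = bil u v"
  have sv: "bil v u = s" using s_def bil_sym by metis
  have "v \<noteq> 0" using False by (auto simp: bil_def)
  define w where "w = bil v (conjv v)"
  have w0: "w \<noteq> 0" using bil_self_conj_zero[of v] \<open>v \<noteq> 0\<close> w_def by auto
  define A where "A = (bil u (conjv v))^2"
  have c1: "contr g v v = (s^2) *s u"
    using assms(2,4) sv s_def by (simp add: contr_add contr_cube power2_eq_square)
  have c2: "contr g (conjv v) (conjv v) = A *s u + (w^2) *s v"
    using assms(2) by (simp add: contr_add contr_cube A_def w_def power2_eq_square bil_sym[of v "conjv v"])
  have e: "(cnj s)^2 *s conjv u = A *s u + (w^2) *s v"
    using contr_real[OF assms(1), of v v] c1 c2 by (simp add: conjv_scale)
  have "bil ((cnj s)^2 *s conjv u) ((cnj s)^2 *s conjv u) = (cnj s)^4 * cnj (bil u u)"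
    by (simp add: bil_scale bil_conj power4_eq_xxxx power2_eq_square algebra_simps)
  hence "0 = bil (A *s u + (w^2) *s v) (A *s u + (w^2) *s v)" using e assms(3) by simp
  also have "\<dots> = 2 * A * w^2 * s" using assms(3,4) sv s_def
    by (simp add: bil_add bil_scale algebra_simps)
  finally have "A = 0" using False s_def w0 by simp
  hence A0: "bil u (conjv v) = 0" using A_def by simp
  have cs: "cnj s \<noteq> 0" using False s_def by simp
  define y where "y = w^2 / (cnj s)^2"
  have ub: "conjv u = y *s v"
  proof -
    have "(cnj s)^2 *s conjv u = (w^2) *s v" using e \<open>A = 0\<close> by simp
    hence "(1/(cnj s)^2) *s ((cnj s)^2 *s conjv u) = (1/(cnj s)^2) *s ((w^2) *s v)" by simp
    thus ?thesis using cs by (simp add: y_def vector_smult_assoc field_simps)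
  qed
  have "cnj (ev g v v v) = ev g (conjv v) (conjv v) (conjv v)" using ev_real[OF assms(1)] by simp
  hence "cnj (s^3) = w^3" using assms(2,4) sv A0 unfolding w_def s_def
    by (simp add: ev_add ev_cube power3_eq_cube bil_sym[of v "conjv v"])
  hence "(cnj s)^3 = w^3" by simp
  hence y3: "y^3 = 1"
  proof -
    assume h: "(cnj s)^3 = w^3"
    have "y^3 = (w^3)^2 / ((cnj s)^3)^2" unfolding y_def
      by (simp add: power_divide flip: power_mult)
    thus ?thesis using h cs w0 by simp
  qed
  have "cube (conjv u) = cube v" using ub y3 by (simp add: cube_scale)
  then show ?thesis using assms(2) by (intro exI[of _ u]) simp
qed


abbreviation cv :: "real^3 \<Rightarrow> complex^3" where "cv a \<equiv> (\<chi> j. complex_of_real (a$j))"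

lemma chi0[simp]: "(\<chi> j. (0::complex)) = 0" by (simp add: vec_eq_iff)

lemma bil_cv: "bil (cv a) (cv b) = of_real (a \<bullet> b)"
  unfolding bil_def by (simp add: inner_vec_def sum_3)

lemma cube_cv_real: "cube (cv a) i j k \<in> \<real>"
  unfolding cube_def by simp

lemma real_diff: "real_valued f \<Longrightarrow> real_valued (\<lambda>i j k. f i j k - cube (cv a) i j k)"
  unfolding real_valued_def using cube_cv_real by (simp add: Reals_diff)

lemma part2:
  fixes f :: tensor3 and \<alpha> \<beta>1 \<beta>2 :: "complex^3"
  assumes "real_valued f"
    and f: "f = (\<lambda>i j k. cube \<alpha> i j k + cube \<beta>1 i j k + cube \<beta>2 i j k)"
    and "bil \<alpha> \<beta>1 = 0" and "bil \<beta>1 \<beta>1 = 0"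
    and "bil \<alpha> \<beta>2 = 0" and "bil \<beta>2 \<beta>2 = 0"
  shows "\<exists>(a::real^3) (b::complex^3).
            f = (\<lambda>i j k. cube (\<chi> j. complex_of_real (a$j)) i j k + cube b i j k
                              + cube (conjv b) i j k) \<and>
            bil (\<chi> j. complex_of_real (a$j)) b = 0 \<and> bil b b = 0"
proof (cases "bil \<alpha> \<alpha> = 0")
  case True
  show ?thesis
  proof (cases "\<alpha> = 0")
    case True
    have "real_valued (\<lambda>i j k. cube \<beta>1 i j k + cube \<beta>2 i j k)" using assms(1) f True by simp
    then obtain b where b: "b = 0 \<or> b = \<beta>1" "(\<lambda>i j k. cube \<beta>1 i j k + cube \<beta>2 i j k) = (\<lambda>i j k. cube b i j k + cube (conjv b) i j k)"
      using lemmaG[OF _ refl assms(4,6)] by blast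
    have "f = (\<lambda>i j k. cube (cv 0) i j k + cube b i j k + cube (conjv b) i j k)"
      using f True b(2) by (simp add: fun_eq_iff)
    moreover have "bil (cv 0) b = 0" by (simp add: bil_def)
    moreover have "bil b b = 0" using b(1) assms(4) by (auto simp: bil_def)
    ultimately show ?thesis by blast
  next
    case False
    obtain t1 where t1: "\<beta>1 = t1 *s \<alpha>" using iso_par[OF \<open>bil \<alpha> \<alpha> = 0\<close> assms(4,3) False] by blast
    obtain t2 where t2: "\<beta>2 = t2 *s \<alpha>" using iso_par[OF \<open>bil \<alpha> \<alpha> = 0\<close> assms(6,5) False] by blast
    have "f = (\<lambda>i j k. (1 + t1^3 + t2^3) * cube \<alpha> i j k)" using f t1 t2
      by (simp add: cube_scale algebra_simps)
    hence "f = (\<lambda>i j k. 0)" using iso_real_zero assms(1) True by blast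
    hence "f = (\<lambda>i j k. cube (cv 0) i j k + cube 0 i j k + cube (conjv 0) i j k)" by simp
    moreover have "bil (cv 0) 0 = 0" "bil (0::complex^3) 0 = 0" by (simp_all add: bil_def)
    ultimately show ?thesis by blast
  qed
next
  case False
  define k where "k = bil \<alpha> \<alpha>"
  have k0: "k \<noteq> 0" using False k_def by simp
  define v where "v = tr f"
  have v: "v = k *s \<alpha>" using f assms(4,6) unfolding v_def k_def by (simp add: tr_add tr_cube)
  have vr: "conjv v = v" using tr_real[OF assms(1)] v_def by simp
  define a0 :: "real^3" where "a0 = (\<chi> j. Re (v$j))"
  have va0: "cv a0 = v"
  proof -
    have "\<And>j. cnj (v$j) = v$j" using vr by (simp add: conjv_def vec_eq_iff)
    hence "\<And>j. Im (v$j) = 0" by (metis Reals_cnj_iff complex_is_Real_iff)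
    thus ?thesis unfolding a0_def by (simp add: vec_eq_iff complex_eq_iff)
  qed
  have "\<alpha> \<noteq> 0" using False by (auto simp: bil_def)
  hence "v \<noteq> 0" using v k0 by (simp add: vec_eq_iff) 
  hence "a0 \<noteq> 0" using va0 by auto
  define M where "M = a0 \<bullet> a0"
  have M0: "M > 0" using \<open>a0 \<noteq> 0\<close> M_def by simp
  have kM: "k^3 = of_real M"
  proof -
    have "of_real M = bil v v" using va0 bil_cv M_def by metis
    also have "\<dots> = k^3" using v k_def by (simp add: bil_scale power3_eq_cube)
    finally show ?thesis by simp
  qed
  define \<rho> where "\<rho> = root 3 M"
  have \<rho>: "\<rho>^3 = M" "\<rho> > 0" using M0 \<rho>_def by simp_all
  define a where "a = (1/\<rho>) *\<^sub>R a0"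
  have ca: "cv a = of_real (1/\<rho>) *s v" using va0 unfolding a_def by (simp add: vec_eq_iff)
  have ca2: "cv a = (of_real (1/\<rho>) * k) *s \<alpha>" using ca v by (simp add: vector_smult_assoc)
  have cubeeq: "cube (cv a) = cube \<alpha>"
  proof -
    have "cube (cv a) = (\<lambda>i j l. (of_real (1/\<rho>))^3 * cube v i j l)" using ca by (simp add: cube_scale)
    moreover have "cube \<alpha> = cube ((1/k) *s v)" using v k0 by (simp add: vector_smult_assoc)
    hence "cube \<alpha> = (\<lambda>i j l. (1/k)^3 * cube v i j l)" by (simp add: cube_scale)
    moreover have "(of_real (1/\<rho>))^3 = (1/k)^3"
      using kM \<rho> by (simp add: power_divide flip: of_real_power)
    ultimately show ?thesis by simp
  qed
  have g: "real_valued (\<lambda>i j k. cube \<beta>1 i j k + cube \<beta>2 i j k)"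
    using real_diff[OF assms(1), of a] f cubeeq by (simp add: algebra_simps)
  then obtain b where b: "b = 0 \<or> b = \<beta>1" "(\<lambda>i j k. cube \<beta>1 i j k + cube \<beta>2 i j k) = (\<lambda>i j k. cube b i j k + cube (conjv b) i j k)"
    using lemmaG[OF _ refl assms(4,6)] by blast
  have "f = (\<lambda>i j k. cube (cv a) i j k + cube b i j k + cube (conjv b) i j k)"
    using f cubeeq b(2) by (simp add: fun_eq_iff algebra_simps)
  moreover have "bil (cv a) b = 0"
  proof -
    have "bil (cv a) \<beta>1 = 0" unfolding ca2 bil_scale using assms(3) by simp
    thus ?thesis using b(1) by (auto simp: bil_def)
  qed
  moreover have "bil b b = 0" using b(1) assms(4) by (auto simp: bil_def)
  ultimately show ?thesis by blast
qed


definition Tv :: "real^3^3 \<Rightarrow> complex^3 \<Rightarrow> complex^3" where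
  "Tv T x = (\<chi> i. \<Sum>p\<in>UNIV. complex_of_real (T$i$p) * x$p)"

lemma tmat_cube: "tmat T (cube x) = cube (Tv T x)"
  unfolding tmat_def cube_def Tv_def by (simp add: sum_3 algebra_simps fun_eq_iff)

lemma tmat_add: "tmat T (\<lambda>i j k. f i j k + g i j k) = (\<lambda>i j k. tmat T f i j k + tmat T g i j k)"
  unfolding tmat_def by (simp add: sum_3 algebra_simps fun_eq_iff)

lemma Tv_cv: "Tv T (cv x) = cv (T *v x)"
  unfolding Tv_def by (simp add: vec_eq_iff matrix_vector_mult_def sum_3)

lemma Tv_add: "Tv T (x + y) = Tv T x + Tv T y"
  unfolding Tv_def by (simp add: vec_eq_iff sum_3 algebra_simps)
lemma Tv_diff: "Tv T (x - y) = Tv T x - Tv T y"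
  unfolding Tv_def by (simp add: vec_eq_iff sum_3 algebra_simps)
lemma Tv_scale: "Tv T (c *s x) = c *s Tv T x"
  unfolding Tv_def by (simp add: vec_eq_iff sum_3 algebra_simps)

lemma e3_comp[simp]: "e3$1 = 0" "e3$2 = 0" "e3$3 = 1"
  unfolding e3_def by simp_all
lemma beta0_comp[simp]: "beta0$1 = 1" "beta0$2 = \<i>" "beta0$3 = 0"
  unfolding beta0_def by simp_all


lemma part1:
  fixes a :: "real^3" and b :: "complex^3"
  assumes f: "f = (\<lambda>i j k. cube (cv a) i j k + cube b i j k + cube (conjv b) i j k)"
    and ab: "bil (cv a) b = 0" and bb: "bil b b = 0"
  shows "\<exists>(T::real^3^3) (\<epsilon>::real) (c::real) (lam::real).
            orthogonal_matrix T \<and> \<epsilon> \<in> {0, 1} \<and> c \<noteq> 0 \<and>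
            (\<lambda>i j k. complex_of_real c * tmat T f i j k) =
            (\<lambda>i j k. complex_of_real \<epsilon> * (cube beta0 i j k + cube (conjv beta0) i j k)
                     + complex_of_real lam * cube e3 i j k)"
proof -
  define P :: "real^3" where "P = (\<chi> j. Re (b$j))"
  define Q :: "real^3" where "Q = (\<chi> j. Im (b$j))"
  have bPQ: "b = cv P + \<i> *s cv Q" unfolding P_def Q_def by (simp add: vec_eq_iff complex_eq_iff)
  have cbPQ: "conjv b = cv P - \<i> *s cv Q" unfolding P_def Q_def conjv_def by (simp add: vec_eq_iff complex_eq_iff)
  have "bil b b = of_real (P \<bullet> P - Q \<bullet> Q) + \<i> * of_real (2 * (P \<bullet> Q))"
    unfolding bPQ by (simp add: bil_add bil_scale bil_cv bil_sym[of "cv Q" "cv P"] algebra_simps inner_commute)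
  hence PQ: "P \<bullet> P = Q \<bullet> Q" "P \<bullet> Q = 0" using bb by (simp_all add: complex_eq_iff)
  have "bil (cv a) b = of_real (a \<bullet> P) + \<i> * of_real (a \<bullet> Q)"
    unfolding bPQ by (simp add: bil_add bil_scale bil_cv)
  hence aPQ: "a \<bullet> P = 0" "a \<bullet> Q = 0" using ab by (simp_all add: complex_eq_iff)
  have tf: "tmat T f = (\<lambda>i j k. cube (cv (T *v a)) i j k + cube (Tv T b) i j k + cube (Tv T (conjv b)) i j k)" for T
    unfolding f by (simp add: tmat_add tmat_cube Tv_cv)
  show ?thesis
  proof (cases "P = 0")
    case True
    hence "Q \<bullet> Q = 0" using PQ by simp
    hence "Q = 0" by simp
    hence b0: "b = 0" using bPQ \<open>P = 0\<close> by simp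
    obtain T :: "real^3^3" where T: "orthogonal_matrix T" "T *v a = norm a *\<^sub>R axis 3 1"
    proof (cases "a = 0")
      case True
      then show ?thesis using that[of "mat 1"] by (simp add: orthogonal_matrix_id)
    next
      case False
      obtain A :: "real^3^3" where A: "orthogonal_matrix A" "A *v axis 3 1 = (1 / norm a) *\<^sub>R a"
      proof -
        have "norm ((1 / norm a) *\<^sub>R a) = 1" using False by simp
        thus ?thesis using orthogonal_matrix_exists_basis that by blast
      qed
      have "transpose A *v a = transpose A *v (norm a *\<^sub>R (A *v axis 3 1))" using A(2) False by simp
      also have "\<dots> = norm a *\<^sub>R ((transpose A ** A) *v axis 3 1)"
        by (simp add: matrix_vector_mult_scaleR matrix_vector_mul_assoc)
      also have "\<dots> = norm a *\<^sub>R axis 3 1" using A(1) by (simp add: orthogonal_matrix)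
      finally show ?thesis using that[of "transpose A"] A(1) by simp
    qed
    have cva: "cv (T *v a) = of_real (norm a) *s e3"
      unfolding T(2) by (simp add: vec_eq_iff forall_3 axis_def)
    have "(\<lambda>i j k. complex_of_real 1 * tmat T f i j k) =
            (\<lambda>i j k. complex_of_real 0 * (cube beta0 i j k + cube (conjv beta0) i j k)
                     + complex_of_real (norm a ^ 3) * cube e3 i j k)"
      unfolding tf cva b0 by (simp add: Tv_def cube_scale)
    thus ?thesis using T(1) by (intro exI[of _ T] exI[of _ 0] exI[of _ 1] exI[of _ "norm a ^ 3"]) simp
  next
    case False
    define \<rho> where "\<rho> = norm P"
    have \<rho>0: "\<rho> > 0" using False \<rho>_def by simp
    have nQ: "norm Q = \<rho>" using PQ \<rho>_def by (simp add: norm_eq_sqrt_inner)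
    define N where "N = cross3 P Q"
    have nN: "norm N = \<rho>^2"
    proof -
      have "(norm N)^2 = (\<rho>^2)^2" using norm_cross_dot[of P Q] PQ nQ \<rho>_def N_def by (simp add: power_mult_distrib power2_eq_square)
      thus ?thesis by (rule power2_eq_imp_eq) auto
    qed
    have PP: "P \<bullet> P = \<rho>^2" using \<rho>_def by (simp add: power2_norm_eq_inner)
    have QQ: "Q \<bullet> Q = \<rho>^2" using nQ by (metis power2_norm_eq_inner)
    have NN: "N \<bullet> N = (\<rho>^2)^2" using nN by (metis power2_norm_eq_inner)
    have NP: "N \<bullet> P = 0" "N \<bullet> Q = 0" "P \<bullet> N = 0" "Q \<bullet> N = 0" unfolding N_def using dot_cross_self
      by (simp_all add: inner_commute)
    define T :: "real^3^3" where "T = vector [(1/\<rho>) *\<^sub>R P, (1/\<rho>) *\<^sub>R Q, (1/\<rho>^2) *\<^sub>R N]"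
    have rows: "row 1 T = (1/\<rho>) *\<^sub>R P" "row 2 T = (1/\<rho>) *\<^sub>R Q" "row 3 T = (1/\<rho>^2) *\<^sub>R N"
      unfolding T_def row_def by (simp_all add: vec_lambda_eta)
    have orth: "orthogonal_matrix T"
      unfolding orthogonal_matrix_orthonormal_rows
    proof (intro conjI allI impI)
      fix i :: 3
      show "norm (row i T) = 1"
        using exhaust_3[of i] rows \<rho>0 \<open>norm Q = \<rho>\<close> nN \<rho>_def by auto
    next
      fix i j :: 3 assume "i \<noteq> j"
      thus "orthogonal (row i T) (row j T)"
        using exhaust_3[of i] exhaust_3[of j] rows PQ NP
        by (auto simp: orthogonal_def inner_commute)
    qed
    define \<mu> where "\<mu> = (N \<bullet> a) / \<rho>^2"
    have TP: "T *v P = \<rho> *\<^sub>R axis 1 1" "T *v Q = \<rho> *\<^sub>R axis 2 1" "T *v a = \<mu> *\<^sub>R axis 3 1"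
      unfolding T_def \<mu>_def using PQ NP aPQ PP QQ \<rho>0
      by (auto simp: vec_eq_iff forall_3 matrix_vector_mul_component axis_def inner_commute power2_eq_square)
    have Tb: "Tv T b = of_real \<rho> *s beta0"
      unfolding bPQ Tv_add Tv_scale Tv_cv TP by (simp add: vec_eq_iff forall_3 axis_def)
    have Tcb: "Tv T (conjv b) = of_real \<rho> *s conjv beta0"
      unfolding cbPQ Tv_diff Tv_scale Tv_cv TP by (simp add: vec_eq_iff forall_3 axis_def conjv_def)
    have Ta: "cv (T *v a) = of_real \<mu> *s e3"
      unfolding TP by (simp add: vec_eq_iff forall_3 axis_def)
    have "(\<lambda>i j k. complex_of_real (1/\<rho>^3) * tmat T f i j k) =
            (\<lambda>i j k. complex_of_real 1 * (cube beta0 i j k + cube (conjv beta0) i j k)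
                     + complex_of_real (\<mu>^3/\<rho>^3) * cube e3 i j k)"
      unfolding tf Ta Tb Tcb using \<rho>0 by (simp add: cube_scale fun_eq_iff field_simps)
    thus ?thesis using orth \<rho>0 by (intro exI[of _ T] exI[of _ 1] exI[of _ "1/\<rho>^3"] exI[of _ "\<mu>^3/\<rho>^3"]) auto
  qed
qed

theorem mainTheorem3:
  fixes f :: tensor3 and \<alpha> \<beta>1 \<beta>2 :: "complex^3"
  assumes "real_valued f" and "symmetric_tensor f"
    and "f = (\<lambda>i j k. cube \<alpha> i j k + cube \<beta>1 i j k + cube \<beta>2 i j k)"
    and "bil \<alpha> \<beta>1 = 0" and "bil \<beta>1 \<beta>1 = 0"
    and "bil \<alpha> \<beta>2 = 0" and "bil \<beta>2 \<beta>2 = 0"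
  shows "(\<exists>(T::real^3^3) (\<epsilon>::real) (c::real) (lam::real).
            orthogonal_matrix T \<and> \<epsilon> \<in> {0, 1} \<and> c \<noteq> 0 \<and>
            (\<lambda>i j k. complex_of_real c * tmat T f i j k) =
            (\<lambda>i j k. complex_of_real \<epsilon> * (cube beta0 i j k + cube (conjv beta0) i j k)
                     + complex_of_real lam * cube e3 i j k))
       \<and> (\<exists>(a::real^3) (b::complex^3).
            f = (\<lambda>i j k. cube (\<chi> j. complex_of_real (a$j)) i j k + cube b i j k
                              + cube (conjv b) i j k) \<and>
            bil (\<chi> j. complex_of_real (a$j)) b = 0 \<and> bil b b = 0)"
proof -
  obtain a b where ab: "f = (\<lambda>i j k. cube (\<chi> j. complex_of_real (a$j)) i j k + cube b i j k
                              + cube (conjv b) i j k)"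
      "bil (\<chi> j. complex_of_real (a$j)) b = 0" "bil b b = 0"
    using part2[OF assms(1,3-7)] by blast
  show ?thesis using part1[OF ab] part2[OF assms(1,3-7)] by blast
qed

end
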